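(* Under the standing assumptions, suppose that $$\operatorname{epi}(f-g+\delta_A)^c\cap B=\Lambda\cap B.$$ Then the following are equivalent: (i) strong duality holds for $(P)-(D^F)$; (ii) strong duality holds for $(P)-(\bar D^F)$ and $\Omega\cap B=K\cap B$. (The implication (ii)$\Rightarrow$(i) holds even without the displayed hypothesis.)
   Context: Let $X$ be a nontrivial separated locally convex space with topological dual $X^*$, endowed with the topology $\sigma(X,X^* )$; $\langle x,x^*\rangle$ is the value of $x^*\in X^*$ at $x\in X$. Put $W:=X^*\times X^*\times\mathbb{R}$, $\mathbb{R}_{++}:=]0,+\infty[$ and $Z:=X^*\times X^*\times\mathbb{R}_{++}$. For $y^*\in X^*$, $\alpha\in\mathbb{R}$, let $H^-_{y^*,\alpha}:=\{x\in X:\langle x,y^*\rangle<\alpha\}$. The coupling function $c:X\times W\to\overline{\mathbb{R}}$ is $c(x,(x^*,y^*,\alpha)):=\langle x,x^*\rangle$ if $\langle x,y^*\rangle<\alpha$ and $:=+\infty$ otherwise. For $h:X\to\overline{\mathbb{R}}$ its $c$-conjugate is $h^c:W\to\overline{\mathbb{R}}$, $h^c(w):=\sup_{x\in X}\{c(x,w)-h(x)\}$, with the convention $(+\infty)+(-\infty)=(-\infty)+(+\infty)=(+\infty)-(+\infty)=(-\infty)-(-\infty)=-\infty$ (so for proper $h$, $h^c(x^*,y^*,\alpha)=h^*(x^* )$ if $\operatorname{dom}h\subseteq H^-_{y^*,\alpha}$ and $+\infty$ otherwise). Epigraphs of functions on $W$ are subsets of $W\times\mathbb{R}$. $\delta_A$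 is the indicator function of $A$. For $E\subseteq W\times\mathbb{R}$ and $e\in W\times\mathbb{R}$, $E-e:=\{z-e:z\in E\}$. Standing assumptions: $f,g:X\to\overline{\mathbb{R}}$ proper convex with $\operatorname{dom}f\subseteq\operatorname{dom}g$, $A\subseteq X$ nonempty, convention $(+\infty)-(+\infty)=+\infty$ in $f-g$; $v(P)=\inf_{x\in X}\{f(x)-g(x)+\delta_A(x)\}$. With $\varphi(u^*,v^*,\gamma;x^*,y^*,\alpha):=g^c(u^*,v^*,\gamma)-f^c(u^*-x^*,-y^*,\alpha)-\delta_A^c(x^*,y^*,\alpha)$: $v(D^F):=\sup_{(x^*,y^*,\alpha)\in Z}\inf_{(u^*,v^*,\gamma)\in\operatorname{dom}g^c}\varphi$ and $v(\bar D^F):=\inf_{(u^*,v^*,\gamma)\in\operatorname{dom}g^c}\sup_{(x^*,y^*,\alpha)\in Z}\varphi$. Strong duality for $(P)-(D^F)$ means $v(P)=v(D^F)$ and there is $(\bar x^*,\bar y^*,\bar\alpha)\in\operatorname{dom}\delta_A^c$ with $\varphi(u^*,v^*,\gamma;\bar x^*,\bar y^*,\bar\alpha)\ge v(D^F)$ for all $(u^*,v^*,\gamma)\in\operatorname{dom}g^c$. Strong duality for $(P)-(\bar D^F)$ means $v(P)=v(\bar D^F)$ and for every $(u^*,v^*,\gamma)\in\operatorname{dom}g^c$ there is $(x^*,y^*,\alpha)\in\operatorname{dom}\delta_A^c$ with $\varphi(u^*,v^*,\gamma;x^*,y^*,\alpha)\ge v(\bar D^F)$. Sets: $B:=\{0\}\times\{0\}\times\mathbb{R}_{++}\times\mathbb{R}\subseteq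 W\times\mathbb{R}$; $\Lambda:=\bigcap_{(u^*,v^*,\gamma)\in\operatorname{dom}g^c}\Big[\operatorname{epi}(f+\delta_A)^c-\big(u^*,0,0,g^c(u^*,v^*,\gamma)\big)\Big]$; $\Omega:=\bigcup_{(x^*,y^*,\alpha)\in\operatorname{dom}\delta_A^c}\ \bigcap_{(u^*,v^*,\gamma)\in\operatorname{dom}g^c}\Big[\operatorname{epi}\big(f-c(\cdot,(-x^*,-y^*,\alpha))\big)^c-\big(u^*,0,0,g^c(u^*,v^*,\gamma)-\delta_A^c(x^*,y^*,\alpha)\big)\Big]$, $K:=\bigcap_{(u^*,v^*,\gamma)\in\operatorname{dom}g^c}\ \bigcup_{(x^*,y^*,\alpha)\in\operatorname{dom}\delta_A^c}\Big[\operatorname{epi}\big(f-c(\cdot,(-x^*,-y^*,\alpha))\big)^c-\big(u^*,0,0,g^c(u^*,v^*,\gamma)-\delta_A^c(x^*,y^*,\alpha)\big)\Big]$. *)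

theory Defs
  imports "HOL-Analysis.Analysis" "HOL-Library.Extended_Real"
begin

definition hlc_space :: "'a::real_vector topology \<Rightarrow> bool" where
  "hlc_space T \<longleftrightarrow>
     topspace T = UNIV \<and> Hausdorff_space T \<and>
     continuous_map (prod_topology T T) T (\<lambda>(x, y). x + y) \<and>
     continuous_map (prod_topology euclideanreal T) T (\<lambda>(a, x). a *\<^sub>R x) \<and>
     (\<forall>U. openin T U \<and> 0 \<in> U \<longrightarrow> (\<exists>V. openin T V \<and> convex V \<and> 0 \<in> V \<and> V \<subseteq> U))"

definition tdual :: "'a::real_vector topology \<Rightarrow> ('a \<Rightarrow> real) set" where
  "tdual T = {l. linear l \<and> continuous_map T euclideanreal l}"

type_synonym 'a wpt = "('a \<Rightarrow> real) \<times> ('a \<Rightarrow> real) \<times> real"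

definition Wsp :: "'a::real_vector topology \<Rightarrow> 'a wpt set" where
  "Wsp T = tdual T \<times> tdual T \<times> UNIV"

definition Zsp :: "'a::real_vector topology \<Rightarrow> 'a wpt set" where
  "Zsp T = tdual T \<times> tdual T \<times> {0<..}"

definition lsub :: "ereal \<Rightarrow> ereal \<Rightarrow> ereal" where
  "lsub a b = (if (a = \<infinity> \<and> b = \<infinity>) \<or> (a = -\<infinity> \<and> b = -\<infinity>) then -\<infinity> else a - b)"

definition usub :: "ereal \<Rightarrow> ereal \<Rightarrow> ereal" where
  "usub a b = (if a = \<infinity> \<and> b = \<infinity> then \<infinity> else a - b)"

definition coupling :: "'a \<Rightarrow> 'a wpt \<Rightarrow> ereal" where
  "coupling x w = (case w of (xs, ys, \<alpha>) \<Rightarrow> if ys x < \<alpha> then ereal (xs x) else \<infinity>)"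

definition cconj :: "('a \<Rightarrow> ereal) \<Rightarrow> 'a wpt \<Rightarrow> ereal" where
  "cconj h w = (SUP x. lsub (coupling x w) (h x))"

definition indic :: "'a set \<Rightarrow> 'a \<Rightarrow> ereal" where
  "indic A x = (if x \<in> A then 0 else \<infinity>)"

definition edom :: "'b set \<Rightarrow> ('b \<Rightarrow> ereal) \<Rightarrow> 'b set" where
  "edom S h = {w \<in> S. h w < \<infinity>}"

definition wepi :: "'a::real_vector topology \<Rightarrow> ('a wpt \<Rightarrow> ereal) \<Rightarrow> ('a wpt \<times> real) set" where
  "wepi T h = {(w, r). w \<in> Wsp T \<and> h w \<le> ereal r}"

definition wshift :: "('a wpt \<times> real) set \<Rightarrow> ('a wpt \<times> real) \<Rightarrow> ('a wpt \<times> real) set" where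
  "wshift E e = (\<lambda>((xs, ys, \<alpha>), r). case e of ((xs', ys', \<alpha>'), r') \<Rightarrow>
                    ((xs - xs', ys - ys', \<alpha> - \<alpha>'), r - r')) ` E"

definition Bset :: "('a wpt \<times> real) set" where
  "Bset = {((xs, ys, \<alpha>), r). xs = (\<lambda>_. 0) \<and> ys = (\<lambda>_. 0) \<and> \<alpha> > 0}"

definition proper_fun :: "('a \<Rightarrow> ereal) \<Rightarrow> bool" where
  "proper_fun f \<longleftrightarrow> (\<forall>x. f x \<noteq> -\<infinity>) \<and> (\<exists>x. f x < \<infinity>)"

definition convex_fun :: "('a::real_vector \<Rightarrow> ereal) \<Rightarrow> bool" where
  "convex_fun f \<longleftrightarrow> convex {(x, r::real). f x \<le> ereal r}"

definition fdom :: "('a \<Rightarrow> ereal) \<Rightarrow> 'a set" where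
  "fdom f = {x. f x < \<infinity>}"

definition phiF :: "('a \<Rightarrow> ereal) \<Rightarrow> ('a \<Rightarrow> ereal) \<Rightarrow> 'a set \<Rightarrow> 'a wpt \<Rightarrow> 'a wpt \<Rightarrow> ereal" where
  "phiF f g A u z = (case u of (us, vs, \<gamma>) \<Rightarrow> case z of (xs, ys, \<alpha>) \<Rightarrow>
     lsub (lsub (cconj g (us, vs, \<gamma>)) (cconj f (us - xs, - ys, \<alpha>))) (cconj (indic A) (xs, ys, \<alpha>)))"

definition vP :: "('a \<Rightarrow> ereal) \<Rightarrow> ('a \<Rightarrow> ereal) \<Rightarrow> 'a set \<Rightarrow> ereal" where
  "vP f g A = (INF x. usub (f x) (g x) + indic A x)"

definition vDF :: "'a::real_vector topology \<Rightarrow> ('a \<Rightarrow> ereal) \<Rightarrow> ('a \<Rightarrow> ereal) \<Rightarrow> 'a set \<Rightarrow> ereal" where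
  "vDF T f g A = (SUP z \<in> Zsp T. INF u \<in> edom (Wsp T) (cconj g). phiF f g A u z)"

definition vDFbar :: "'a::real_vector topology \<Rightarrow> ('a \<Rightarrow> ereal) \<Rightarrow> ('a \<Rightarrow> ereal) \<Rightarrow> 'a set \<Rightarrow> ereal" where
  "vDFbar T f g A = (INF u \<in> edom (Wsp T) (cconj g). SUP z \<in> Zsp T. phiF f g A u z)"

definition strong_duality_DF :: "'a::real_vector topology \<Rightarrow> ('a \<Rightarrow> ereal) \<Rightarrow> ('a \<Rightarrow> ereal) \<Rightarrow> 'a set \<Rightarrow> bool" where
  "strong_duality_DF T f g A \<longleftrightarrow> vP f g A = vDF T f g A \<and>
     (\<exists>z \<in> edom (Wsp T) (cconj (indic A)).
        \<forall>u \<in> edom (Wsp T) (cconj g). phiF f g A u z \<ge> vDF T f g A)"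

definition strong_duality_DFbar :: "'a::real_vector topology \<Rightarrow> ('a \<Rightarrow> ereal) \<Rightarrow> ('a \<Rightarrow> ereal) \<Rightarrow> 'a set \<Rightarrow> bool" where
  "strong_duality_DFbar T f g A \<longleftrightarrow> vP f g A = vDFbar T f g A \<and>
     (\<forall>u \<in> edom (Wsp T) (cconj g). \<exists>z \<in> edom (Wsp T) (cconj (indic A)).
        phiF f g A u z \<ge> vDFbar T f g A)"

definition LambdaSet :: "'a::real_vector topology \<Rightarrow> ('a \<Rightarrow> ereal) \<Rightarrow> ('a \<Rightarrow> ereal) \<Rightarrow> 'a set \<Rightarrow> ('a wpt \<times> real) set" where
  "LambdaSet T f g A = (\<Inter>u \<in> edom (Wsp T) (cconj g).
      wshift (wepi T (cconj (\<lambda>x. f x + indic A x)))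
             ((fst u, (\<lambda>_. 0), 0), real_of_ereal (cconj g u)))"

definition OKpiece :: "'a::real_vector topology \<Rightarrow> ('a \<Rightarrow> ereal) \<Rightarrow> ('a \<Rightarrow> ereal) \<Rightarrow> 'a set \<Rightarrow> 'a wpt \<Rightarrow> 'a wpt \<Rightarrow> ('a wpt \<times> real) set" where
  "OKpiece T f g A z u = (case z of (xs, ys, \<alpha>) \<Rightarrow>
      wshift (wepi T (cconj (\<lambda>x. usub (f x) (coupling x (- xs, - ys, \<alpha>)))))
             ((fst u, (\<lambda>_. 0), 0), real_of_ereal (cconj g u) - real_of_ereal (cconj (indic A) z)))"

definition OmegaSet :: "'a::real_vector topology \<Rightarrow> ('a \<Rightarrow> ereal) \<Rightarrow> ('a \<Rightarrow> ereal) \<Rightarrow> 'a set \<Rightarrow> ('a wpt \<times> real) set" where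
  "OmegaSet T f g A = (\<Union>z \<in> edom (Wsp T) (cconj (indic A)). \<Inter>u \<in> edom (Wsp T) (cconj g). OKpiece T f g A z u)"

definition KSet :: "'a::real_vector topology \<Rightarrow> ('a \<Rightarrow> ereal) \<Rightarrow> ('a \<Rightarrow> ereal) \<Rightarrow> 'a set \<Rightarrow> ('a wpt \<times> real) set" where
  "KSet T f g A = (\<Inter>u \<in> edom (Wsp T) (cconj g). \<Union>z \<in> edom (Wsp T) (cconj (indic A)). OKpiece T f g A z u)"

end

theory Submission
  imports Defs
begin

lemma zero_tdual: "(\<lambda>_. 0) \<in> tdual T"
  unfolding tdual_def by (auto intro!: linearI)

lemma proper_indic: "A \<noteq> {} \<Longrightarrow> proper_fun (indic A)"
  unfolding proper_fun_def indic_def by auto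

lemma cconj_not_minf: assumes "proper_fun h" shows "cconj h w \<noteq> -\<infinity>"
proof -
  obtain x0 where "h x0 < \<infinity>" using assms unfolding proper_fun_def by auto
  moreover have "h x0 \<noteq> -\<infinity>" using assms unfolding proper_fun_def by auto
  ultimately obtain v where v: "h x0 = ereal v" by (cases "h x0") auto
  have "lsub (coupling x0 w) (h x0) \<le> cconj h w" unfolding cconj_def by (rule SUP_upper) simp
  moreover have "lsub (coupling x0 w) (h x0) \<noteq> -\<infinity>"
    using v by (cases w) (auto simp: lsub_def coupling_def)
  ultimately show ?thesis by auto
qed

lemma lsub_mono: "a \<le> a' \<Longrightarrow> b' \<le> b \<Longrightarrow> lsub a b \<le> lsub a' b'"
  unfolding lsub_def by (cases a; cases a'; cases b; cases b') auto

lemma coupling_mono: "\<alpha> \<le> \<alpha>' \<Longrightarrow> coupling x (a, b, \<alpha>') \<le> coupling x (a, b, \<alpha>)"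
  unfolding coupling_def by auto

lemma cconj_mono_alpha: "\<alpha> \<le> \<alpha>' \<Longrightarrow> cconj h (a, b, \<alpha>') \<le> cconj h (a, b, \<alpha>)"
  unfolding cconj_def by (rule SUP_mono) (auto intro!: lsub_mono coupling_mono)

lemma phiF_alt: "phiF f g A u (xs, ys, \<alpha>) =
   lsub (lsub (cconj g u) (cconj f (fst u - xs, - ys, \<alpha>))) (cconj (indic A) (xs, ys, \<alpha>))"
  unfolding phiF_def by (cases u) auto

lemma phiF_mono_alpha: "\<alpha> \<le> \<alpha>' \<Longrightarrow> phiF f g A u (xs, ys, \<alpha>) \<le> phiF f g A u (xs, ys, \<alpha>')"
  unfolding phiF_alt by (intro lsub_mono order_refl cconj_mono_alpha)

lemma Zd_ne: "((\<lambda>_. 0), (\<lambda>_. 0), 1) \<in> edom (Wsp T) (cconj (indic A))"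
proof -
  have "cconj (indic A) ((\<lambda>_. 0), (\<lambda>_. 0), 1) \<le> 0"
    unfolding cconj_def by (rule SUP_least) (auto simp: lsub_def indic_def coupling_def)
  then show ?thesis unfolding edom_def Wsp_def using zero_tdual by auto
qed

lemma wshift_mem: "((a,b,c),r) \<in> wshift E ((a',b',c'),r') \<longleftrightarrow> (((\<lambda>x. a x + a' x),(\<lambda>x. b x + b' x),c+c'),r+r') \<in> E"
proof
  assume "((a,b,c),r) \<in> wshift E ((a',b',c'),r')"
  then obtain qa qb qc qr where q: "((qa,qb,qc),qr) \<in> E" "a = qa - a'" "b = qb - b'" "c = qc - c'" "r = qr - r'"
    unfolding wshift_def by auto
  moreover have "(\<lambda>x. a x + a' x) = qa" "(\<lambda>x. b x + b' x) = qb" using q by auto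
  ultimately show "(((\<lambda>x. a x + a' x),(\<lambda>x. b x + b' x),c+c'),r+r') \<in> E" by simp
next
  assume "(((\<lambda>x. a x + a' x),(\<lambda>x. b x + b' x),c+c'),r+r') \<in> E"
  then show "((a,b,c),r) \<in> wshift E ((a',b',c'),r')"
    unfolding wshift_def by (auto intro!: image_eqI[where x="(((\<lambda>x. a x + a' x),(\<lambda>x. b x + b' x),c+c'),r+r')"])
qed

lemma cconj_pos: "\<beta> > 0 \<Longrightarrow> cconj h (us, (\<lambda>_. 0), \<beta>) = (SUP x. lsub (ereal (us x)) (h x))"
  unfolding cconj_def coupling_def by simp

lemma F_eq: assumes "\<forall>x. f x \<noteq> -\<infinity>"
  shows "(SUP x. lsub (ereal (us x)) (usub (f x) (coupling x (- xs, - ys, \<alpha>)))) = cconj f (us - xs, - ys, \<alpha>)"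
  unfolding cconj_def
proof (rule SUP_cong[OF refl])
  fix x
  show "lsub (ereal (us x)) (usub (f x) (coupling x (- xs, - ys, \<alpha>))) = lsub (coupling x (us - xs, - ys, \<alpha>)) (f x)"
    using assms[rule_format, of x] unfolding lsub_def usub_def coupling_def
    by (cases "f x") auto
qed

lemma epi_val: "cconj H ((\<lambda>_. 0), (\<lambda>_. 0), \<beta>) = - (INF x. H x)" if "\<beta> > 0"
proof -
  have "cconj H ((\<lambda>_. 0), (\<lambda>_. 0), \<beta>) = (SUP x. - H x)"
    using that unfolding cconj_def coupling_def lsub_def by (simp add: zero_ereal_def[symmetric])
  also have "\<dots> = - (INF x. H x)" by (rule ereal_SUP_uminus_eq)
  finally show ?thesis .
qed

lemma memOK:
  assumes "\<forall>x. f x \<noteq> -\<infinity>" "\<beta> > 0" "u \<in> Wsp T" "cconj g u = ereal G" "cconj (indic A) z = ereal D"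
  shows "(((\<lambda>_. 0),(\<lambda>_. 0),\<beta>),r) \<in> OKpiece T f g A z u \<longleftrightarrow> ereal (-r) \<le> phiF f g A u z"
proof -
  obtain us vs \<gamma> where u: "u = (us, vs, \<gamma>)" by (cases u) auto
  obtain xs ys \<alpha> where z: "z = (xs, ys, \<alpha>)" by (cases z) auto
  have us: "us \<in> tdual T" using assms(3) u unfolding Wsp_def by auto
  define F where "F = cconj f (us - xs, - ys, \<alpha>)"
  have "(((\<lambda>_. 0),(\<lambda>_. 0),\<beta>),r) \<in> OKpiece T f g A z u \<longleftrightarrow> F \<le> ereal (r + (G - D))"
    unfolding OKpiece_def z u using assms(1,2) assms(4,5)[unfolded u z] us zero_tdual
    by (simp add: wshift_mem wepi_def Wsp_def cconj_pos F_eq F_def zero_tdual)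
  also have "\<dots> \<longleftrightarrow> ereal (-r) \<le> lsub (lsub (ereal G) F) (ereal D)"
    by (cases F) (auto simp: lsub_def)
  also have "lsub (lsub (ereal G) F) (ereal D) = phiF f g A u z"
    using assms(4,5)[unfolded u z] by (simp add: u z phiF_alt F_def)
  finally show ?thesis .
qed

lemma memLam:
  assumes "\<beta> > 0" "u \<in> Wsp T"
  shows "(((\<lambda>_. 0),(\<lambda>_. 0),\<beta>),r) \<in> wshift (wepi T (cconj (\<lambda>x. f x + indic A x))) ((fst u, (\<lambda>_. 0), 0), G)
     \<longleftrightarrow> (SUP x. lsub (ereal (fst u x)) (f x + indic A x)) \<le> ereal (r + G)"
proof -
  obtain us vs \<gamma> where u: "u = (us, vs, \<gamma>)" by (cases u) auto
  have us: "us \<in> tdual T" using assms(2) u unfolding Wsp_def by auto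
  show ?thesis using assms(1) us
    by (simp add: u wshift_mem wepi_def Wsp_def cconj_pos zero_tdual)
qed

lemma memEpi:
  assumes "\<beta> > 0"
  shows "(((\<lambda>_. 0),(\<lambda>_. 0),\<beta>),r) \<in> wepi T (cconj H) \<longleftrightarrow> - (INF x. H x) \<le> ereal r"
  using assms by (simp add: wepi_def Wsp_def zero_tdual epi_val)

lemma Bset_mem: "p \<in> Bset \<longleftrightarrow> (\<exists>\<beta> r. \<beta> > 0 \<and> p = (((\<lambda>_. 0),(\<lambda>_. 0),\<beta>),r))"
  unfolding Bset_def by auto

lemma edom_real: "proper_fun k \<Longrightarrow> u \<in> edom S (cconj k) \<Longrightarrow> cconj k u = ereal (real_of_ereal (cconj k u))"
  using cconj_not_minf[of k u] unfolding edom_def by (cases "cconj k u") auto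

lemma phi_psi:
  assumes pf: "proper_fun f" and A: "A \<noteq> {}" and G: "cconj g u = ereal G"
  shows "phiF f g A u (xs, ys, \<alpha>) \<le> ereal G - (SUP x. lsub (ereal (fst u x)) (f x + indic A x))"
proof -
  define us where "us = fst u"
  define F where "F = cconj f (us - xs, - ys, \<alpha>)"
  define D where "D = cconj (indic A) (xs, ys, \<alpha>)"
  have phi: "phiF f g A u (xs, ys, \<alpha>) = lsub (lsub (ereal G) F) D"
    by (simp add: phiF_alt G F_def D_def us_def)
  have Fm: "F \<noteq> -\<infinity>" unfolding F_def by (rule cconj_not_minf[OF pf])
  have Dm: "D \<noteq> -\<infinity>" unfolding D_def by (rule cconj_not_minf[OF proper_indic[OF A]])
  show ?thesis
  proof (cases "F = \<infinity> \<or> D = \<infinity>")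
    case True
    then have "lsub (lsub (ereal G) F) D = -\<infinity>" using Fm Dm
      by (cases F; cases D) (auto simp: lsub_def)
    then show ?thesis using phi by simp
  next
    case False
    then obtain a d where a: "F = ereal a" and d: "D = ereal d" using Fm Dm
      by (cases F; cases D) auto
    have "(SUP x. lsub (ereal (us x)) (f x + indic A x)) \<le> ereal (a + d)"
    proof (rule SUP_least)
      fix x
      have tF: "lsub (coupling x (us - xs, - ys, \<alpha>)) (f x) \<le> F"
        unfolding F_def cconj_def by (rule SUP_upper) simp
      have tD: "lsub (coupling x (xs, ys, \<alpha>)) (indic A x) \<le> D"
        unfolding D_def cconj_def by (rule SUP_upper) simp
      have fx: "f x \<noteq> -\<infinity>" using pf unfolding proper_fun_def by auto
      show "lsub (ereal (us x)) (f x + indic A x) \<le> ereal (a + d)"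
      proof (cases "x \<in> A")
        case False
        then show ?thesis using fx by (cases "f x") (auto simp: lsub_def indic_def)
      next
        case True
        show ?thesis
        proof (cases "f x")
          case (real v)
          have c1: "ys x < \<alpha>"
          proof (rule ccontr)
            assume "\<not> ys x < \<alpha>"
            then show False using tD d True by (auto simp: lsub_def indic_def coupling_def)
          qed
          have c2: "- ys x < \<alpha>"
          proof (rule ccontr)
            assume "\<not> - ys x < \<alpha>"
            then show False using tF a real by (auto simp: lsub_def coupling_def)
          qed
          have "xs x \<le> d" using tD d True c1 by (auto simp: lsub_def indic_def coupling_def)
          moreover have "us x - xs x - v \<le> a" using tF a real c2 by (auto simp: lsub_def coupling_def)
          ultimately show ?thesis using True real by (auto simp: lsub_def indic_def)
        qed (auto simp: lsub_def indic_def True fx)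
      qed
    qed
    then show ?thesis using phi a d unfolding us_def
      by (cases "(SUP x. lsub (ereal (fst u x)) (f x + indic A x))") (auto simp: lsub_def)
  qed
qed

lemma phi_not_inf:
  assumes pf: "proper_fun f" and A: "A \<noteq> {}" and G: "cconj g u = ereal G"
  shows "phiF f g A u (xs, ys, \<alpha>) \<noteq> \<infinity>"
proof -
  have Fm: "cconj f (fst u - xs, - ys, \<alpha>) \<noteq> -\<infinity>" by (rule cconj_not_minf[OF pf])
  have Dm: "cconj (indic A) (xs, ys, \<alpha>) \<noteq> -\<infinity>" by (rule cconj_not_minf[OF proper_indic[OF A]])
  show ?thesis using Fm Dm unfolding phiF_alt G
    by (cases "cconj f (fst u - xs, - ys, \<alpha>)"; cases "cconj (indic A) (xs, ys, \<alpha>)") (auto simp: lsub_def)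
qed

lemma conv_le: "ereal t \<le> ereal G - S \<Longrightarrow> S \<le> ereal (- t + G)"
  by (cases S) auto

theorem theorem5p5:
  fixes T :: "'a::real_vector topology"
    and f g :: "'a \<Rightarrow> ereal" and A :: "'a set"
  assumes "hlc_space T"
    and "\<exists>x::'a. x \<noteq> 0"
    and "proper_fun f" and "convex_fun f"
    and "proper_fun g" and "convex_fun g"
    and "fdom f \<subseteq> fdom g"
    and "A \<noteq> {}"
  shows "(strong_duality_DFbar T f g A \<and> OmegaSet T f g A \<inter> Bset = KSet T f g A \<inter> Bset
            \<longrightarrow> strong_duality_DF T f g A)
       \<and> (wepi T (cconj (\<lambda>x. usub (f x) (g x) + indic A x)) \<inter> Bset = LambdaSet T f g A \<inter> Bset
            \<longrightarrow> (strong_duality_DF T f g A \<longleftrightarrow>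
                 strong_duality_DFbar T f g A \<and> OmegaSet T f g A \<inter> Bset = KSet T f g A \<inter> Bset))"
proof -
  note pf = assms(3) and pg = assms(5) and An = assms(8)
  define U where "U = edom (Wsp T) (cconj g)"
  define Zd where "Zd = edom (Wsp T) (cconj (indic A))"
  define phi where "phi = phiF f g A"
  define S where "S us = (SUP x. lsub (ereal (us x)) (f x + indic A x))" for us :: "'a \<Rightarrow> real"
  define Gr where "Gr u = real_of_ereal (cconj g u)" for u
  define vp where "vp = vP f g A"
  define vdf where "vdf = vDF T f g A"
  define vdfb where "vdfb = vDFbar T f g A"
  have Greal: "u \<in> U \<Longrightarrow> cconj g u = ereal (Gr u)" for u
    unfolding U_def Gr_def by (rule edom_real[OF pg])
  have Dreal: "z \<in> Zd \<Longrightarrow> cconj (indic A) z = ereal (real_of_ereal (cconj (indic A) z))" for z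
    unfolding Zd_def by (rule edom_real[OF proper_indic[OF An]])
  have fnm: "\<forall>x. f x \<noteq> -\<infinity>" using pf unfolding proper_fun_def by auto
  have UW: "u \<in> U \<Longrightarrow> u \<in> Wsp T" for u unfolding U_def edom_def by auto
  have ZW: "z \<in> Zd \<Longrightarrow> z \<in> Wsp T" for z unfolding Zd_def edom_def by auto
  have z00: "((\<lambda>_. 0), (\<lambda>_. 0), 1) \<in> Zd" unfolding Zd_def by (rule Zd_ne)

  have okc: "z \<in> Zd \<Longrightarrow> u \<in> U \<Longrightarrow> \<beta> > 0 \<Longrightarrow>
     ((((\<lambda>_. 0),(\<lambda>_. 0),\<beta>),r) \<in> OKpiece T f g A z u \<longleftrightarrow> ereal (-r) \<le> phi u z)" for z u \<beta> r
    unfolding phi_def by (rule memOK[OF fnm _ UW Greal Dreal])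
  have Om: "\<beta> > 0 \<Longrightarrow> ((((\<lambda>_. 0),(\<lambda>_. 0),\<beta>),r) \<in> OmegaSet T f g A \<longleftrightarrow>
      (\<exists>z\<in>Zd. \<forall>u\<in>U. ereal (-r) \<le> phi u z))" for \<beta> r
    unfolding OmegaSet_def U_def[symmetric] Zd_def[symmetric] by (auto simp: okc)
  have Km: "\<beta> > 0 \<Longrightarrow> ((((\<lambda>_. 0),(\<lambda>_. 0),\<beta>),r) \<in> KSet T f g A \<longleftrightarrow>
      (\<forall>u\<in>U. \<exists>z\<in>Zd. ereal (-r) \<le> phi u z))" for \<beta> r
    unfolding KSet_def U_def[symmetric] Zd_def[symmetric] by (auto simp: okc)
  have Lm: "\<beta> > 0 \<Longrightarrow> ((((\<lambda>_. 0),(\<lambda>_. 0),\<beta>),r) \<in> LambdaSet T f g A \<longleftrightarrow>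
      (\<forall>u\<in>U. S (fst u) \<le> ereal (r + Gr u)))" for \<beta> r
    unfolding LambdaSet_def U_def[symmetric] Gr_def[symmetric] S_def by (auto simp: memLam UW)
  have Em: "\<beta> > 0 \<Longrightarrow> ((((\<lambda>_. 0),(\<lambda>_. 0),\<beta>),r) \<in> wepi T (cconj (\<lambda>x. usub (f x) (g x) + indic A x))
      \<longleftrightarrow> - vp \<le> ereal r)" for \<beta> r
    unfolding vp_def vP_def by (rule memEpi)

  define Oc where "Oc t = (\<exists>z\<in>Zd. \<forall>u\<in>U. ereal t \<le> phi u z)" for t
  define Kc where "Kc t = (\<forall>u\<in>U. \<exists>z\<in>Zd. ereal t \<le> phi u z)" for t
  have OK_iff: "OmegaSet T f g A \<inter> Bset = KSet T f g A \<inter> Bset \<longleftrightarrow> (\<forall>t. Oc t \<longleftrightarrow> Kc t)"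
  proof
    assume eq: "OmegaSet T f g A \<inter> Bset = KSet T f g A \<inter> Bset"
    show "\<forall>t. Oc t \<longleftrightarrow> Kc t"
    proof
      fix t
      have B: "(((\<lambda>_. 0),(\<lambda>_. 0),1::real),-t) \<in> Bset" by (auto simp: Bset_mem)
      have "(((\<lambda>_. 0),(\<lambda>_. 0),1::real),-t) \<in> OmegaSet T f g A \<longleftrightarrow> (((\<lambda>_. 0),(\<lambda>_. 0),1::real),-t) \<in> KSet T f g A"
        using eq B by blast
      then show "Oc t \<longleftrightarrow> Kc t" using Om[of 1 "-t"] Km[of 1 "-t"] unfolding Oc_def Kc_def by simp
    qed
  next
    assume c: "\<forall>t. Oc t \<longleftrightarrow> Kc t"
    show "OmegaSet T f g A \<inter> Bset = KSet T f g A \<inter> Bset"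
    proof (rule set_eqI)
      fix p
      show "p \<in> OmegaSet T f g A \<inter> Bset \<longleftrightarrow> p \<in> KSet T f g A \<inter> Bset"
      proof (cases "p \<in> Bset")
        case True
        then obtain \<beta> r where br: "\<beta> > 0" "p = (((\<lambda>_. 0),(\<lambda>_. 0),\<beta>),r)" by (auto simp: Bset_mem)
        then show ?thesis using Om[OF br(1), of r] Km[OF br(1), of r] c[rule_format, of "-r"] True
          unfolding Oc_def Kc_def by simp
      qed simp
    qed
  qed

  have sdF: "strong_duality_DF T f g A \<longleftrightarrow> vp = vdf \<and> (\<exists>z\<in>Zd. \<forall>u\<in>U. vdf \<le> phi u z)"
    by (simp add: strong_duality_DF_def vp_def vdf_def U_def Zd_def phi_def)
  have sdFb: "strong_duality_DFbar T f g A \<longleftrightarrow> vp = vdfb \<and> (\<forall>u\<in>U. \<exists>z\<in>Zd. vdfb \<le> phi u z)"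
    by (simp add: strong_duality_DFbar_def vp_def vdfb_def U_def Zd_def phi_def)
  have vdf_eq: "vdf = (SUP z\<in>Zsp T. INF u\<in>U. phi u z)" by (simp add: vdf_def vDF_def U_def phi_def)
  have vdfb_eq: "vdfb = (INF u\<in>U. SUP z\<in>Zsp T. phi u z)" by (simp add: vdfb_def vDFbar_def U_def phi_def)

  have minimax: "vdf \<le> vdfb"
    unfolding vdf_eq vdfb_eq
  proof (intro SUP_least INF_greatest)
    fix z u assume "z \<in> Zsp T" "u \<in> U"
    then have "(INF u\<in>U. phi u z) \<le> phi u z" by (intro INF_lower)
    also have "\<dots> \<le> (SUP z\<in>Zsp T. phi u z)" using \<open>z \<in> Zsp T\<close> by (intro SUP_upper)
    finally show "(INF u\<in>U. phi u z) \<le> (SUP z\<in>Zsp T. phi u z)" .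
  qed
  have psi: "phi u z \<le> ereal (Gr u) - S (fst u)" if "u \<in> U" for u z
  proof -
    obtain xs ys \<alpha> where z: "z = (xs, ys, \<alpha>)" by (cases z) auto
    show ?thesis unfolding z phi_def S_def by (rule phi_psi[OF pf An Greal[OF that]])
  qed
  have psiS: "(SUP z\<in>Zsp T. phi u z) \<le> ereal (Gr u) - S (fst u)" if "u \<in> U" for u
    by (rule SUP_least) (rule psi[OF that])
  have lift: "\<exists>z'\<in>Zsp T. \<forall>u. phi u z \<le> phi u z'" if "z \<in> Zd" for z
  proof -
    obtain xs ys \<alpha> where z: "z = (xs, ys, \<alpha>)" by (cases z) auto
    have "(xs, ys, max \<alpha> 1) \<in> Zsp T" using ZW[OF that] z unfolding Wsp_def Zsp_def by auto
    moreover have "\<forall>u. phi u z \<le> phi u (xs, ys, max \<alpha> 1)"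
      unfolding z phi_def by (auto intro: phiF_mono_alpha)
    ultimately show ?thesis by blast
  qed

  have part1: "strong_duality_DFbar T f g A \<and> OmegaSet T f g A \<inter> Bset = KSet T f g A \<inter> Bset
            \<longrightarrow> strong_duality_DF T f g A"
  proof
    assume "strong_duality_DFbar T f g A \<and> OmegaSet T f g A \<inter> Bset = KSet T f g A \<inter> Bset"
    then have sd: "vp = vdfb" "\<forall>u\<in>U. \<exists>z\<in>Zd. vdfb \<le> phi u z" and oc: "\<forall>t. Oc t \<longleftrightarrow> Kc t"
      using sdFb OK_iff by auto
    obtain z0 where z0: "z0 \<in> Zd" "\<forall>u\<in>U. vdfb \<le> phi u z0"
    proof (cases vdfb)
      case (real t)
      then have "Kc t" using sd(2) unfolding Kc_def by auto
      then have "Oc t" using oc by auto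
      then show ?thesis using that real unfolding Oc_def by auto
    next
      case PInf
      show ?thesis
      proof (cases "U = {}")
        case True then show ?thesis using that z00 by auto
      next
        case False
        then obtain u where u: "u \<in> U" by auto
        then obtain z where "z \<in> Zd" "vdfb \<le> phi u z" using sd(2) by auto
        then have "phi u z = \<infinity>" using PInf by auto
        moreover obtain xs ys \<alpha> where "z = (xs, ys, \<alpha>)" by (cases z) auto
        ultimately show ?thesis using phi_not_inf[OF pf An Greal[OF u]] unfolding phi_def by auto
      qed
    next
      case MInf
      then show ?thesis using that z00 by auto
    qed
    obtain z' where z': "z' \<in> Zsp T" "\<forall>u. phi u z0 \<le> phi u z'" using lift[OF z0(1)] by auto
    have "vdfb \<le> (INF u\<in>U. phi u z')"
      using z0(2) z'(2) by (intro INF_greatest) (meson order_trans)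
    also have "\<dots> \<le> vdf" unfolding vdf_eq using z'(1) by (rule SUP_upper)
    finally have "vdfb \<le> vdf" .
    then have e: "vdf = vdfb" using minimax by auto
    show "strong_duality_DF T f g A" unfolding sdF using sd(1) e z0 by auto
  qed

  have part2: "strong_duality_DF T f g A \<longrightarrow>
                 strong_duality_DFbar T f g A \<and> OmegaSet T f g A \<inter> Bset = KSet T f g A \<inter> Bset"
    if H: "wepi T (cconj (\<lambda>x. usub (f x) (g x) + indic A x)) \<inter> Bset = LambdaSet T f g A \<inter> Bset"
  proof
    have Hc: "(\<forall>u\<in>U. S (fst u) \<le> ereal (- t + Gr u)) \<Longrightarrow> ereal t \<le> vp" for t
    proof -
      assume a: "\<forall>u\<in>U. S (fst u) \<le> ereal (- t + Gr u)"
      have B: "(((\<lambda>_. 0),(\<lambda>_. 0),1::real),-t) \<in> Bset" by (auto simp: Bset_mem)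
      have "(((\<lambda>_. 0),(\<lambda>_. 0),1::real),-t) \<in> LambdaSet T f g A" using Lm[of 1 "-t"] a by simp
      then have "(((\<lambda>_. 0),(\<lambda>_. 0),1::real),-t) \<in> wepi T (cconj (\<lambda>x. usub (f x) (g x) + indic A x))"
        using H B by blast
      then have "- vp \<le> ereal (-t)" using Em[of 1 "-t"] by simp
      then show "ereal t \<le> vp" by (cases vp) auto
    qed
    assume "strong_duality_DF T f g A"
    then obtain z0 where sd: "vp = vdf" and z0: "z0 \<in> Zd" "\<forall>u\<in>U. vdf \<le> phi u z0"
      using sdF by auto
    have bound: "ereal t \<le> vp" if "\<forall>u\<in>U. ereal t \<le> (SUP z\<in>Zsp T. phi u z)" for t
    proof (rule Hc, intro ballI)
      fix u assume u: "u \<in> U"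
      have "ereal t \<le> ereal (Gr u) - S (fst u)" using that u psiS[OF u] by (meson order_trans)
      then show "S (fst u) \<le> ereal (- t + Gr u)" by (rule conv_le)
    qed
    have "vdfb \<le> vp"
    proof (rule ccontr)
      assume "\<not> vdfb \<le> vp"
      then have "vp < vdfb" by simp
      then obtain t where t: "vp < ereal t" "ereal t < vdfb" using ereal_dense2 by blast
      have "\<forall>u\<in>U. ereal t \<le> (SUP z\<in>Zsp T. phi u z)"
      proof
        fix u assume "u \<in> U"
        then have "vdfb \<le> (SUP z\<in>Zsp T. phi u z)" unfolding vdfb_eq by (rule INF_lower)
        then show "ereal t \<le> (SUP z\<in>Zsp T. phi u z)" using t(2) by auto
      qed
      then have "ereal t \<le> vp" by (rule bound)
      then show False using t(1) by auto
    qed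
    then have e: "vdfb = vp" using minimax sd by auto
    have c1: "strong_duality_DFbar T f g A" unfolding sdFb using e sd z0 by auto
    have "\<forall>t. Oc t \<longleftrightarrow> Kc t"
    proof (intro allI iffI)
      fix t assume "Oc t" then show "Kc t" unfolding Oc_def Kc_def by blast
    next
      fix t assume k: "Kc t"
      have "\<forall>u\<in>U. S (fst u) \<le> ereal (- t + Gr u)"
      proof
        fix u assume u: "u \<in> U"
        then obtain z where "ereal t \<le> phi u z" using k unfolding Kc_def by auto
        then have "ereal t \<le> ereal (Gr u) - S (fst u)" using psi[OF u] by (rule order_trans)
        then show "S (fst u) \<le> ereal (- t + Gr u)" by (rule conv_le)
      qed
      then have "ereal t \<le> vp" by (rule Hc)
      then have "\<forall>u\<in>U. ereal t \<le> phi u z0" using z0(2) sd by (auto intro: order_trans)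
      then show "Oc t" unfolding Oc_def using z0(1) by blast
    qed
    then show "strong_duality_DFbar T f g A \<and> OmegaSet T f g A \<inter> Bset = KSet T f g A \<inter> Bset"
      using c1 OK_iff by auto
  qed
  show ?thesis using part1 part2 by blast
qed

end
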